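(* In the setting below, suppose that either (1) $\mathbb{P}(X=x)>0$, or (2) there exists $r>0$ such that $\mathbb{E}[\mathbb{I}_{\bar B_r}(X)\,|\eta(X)-\eta(x)|]=0$. Then $\mathbb{E}\big[|\eta(X^x_m)-\eta(x)|\big]\to 0$ as $m\to\infty$.
   Context: Let $(\mathcal{X},d)$ be a metric space with its Borel $\sigma$-algebra, let $(\Omega,\mathcal{F},\mathbb{P})$ be a probability space, and let $X,X_1,X_2,\dots$ be i.i.d. $\mathcal{X}$-valued random variables with common law $\mathbb{P}_X$. For $x\in\mathcal{X}$ and $r>0$ write $B_r=\{x':d(x,x')<r\}$, $\bar B_r=\{x':d(x,x')\le r\}$ and $S_r=\{x':d(x,x')=r\}$. The support of $\mathbb{P}_X$ is the set of $x$ such that $\mathbb{P}_X(\bar B_r(x))>0$ for all $r>0$. Fix $x$ in the support of $\mathbb{P}_X$ and a bounded measurable $\eta:\mathcal{X}\to\mathbb{R}$. For each $m\in\mathbb{N}$, a nearest neighbor of $x$ among $X_1,\dots,X_m$ is a measurable $X^x_m:\Omega\to\mathcal{X}$ with $X^x_m(\omega)\in\arg\min_{x'\in\{X_1(\omega),\dots,X_m(\omega)\}}d(x,x')$ for every $\omega\in\Omega$; fix such a sequence $(X^x_m)_{m\in\mathbb{N}}$. *)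

theory Defs
  imports "HOL-Probability.Probability"
begin

end

theory Submission
  imports Defs
begin

theorem mainTheorem2:
  fixes M :: "'b measure"
    and X :: "'b \<Rightarrow> 'a::metric_space"
    and Xs :: "nat \<Rightarrow> 'b \<Rightarrow> 'a"
    and NN :: "nat \<Rightarrow> 'b \<Rightarrow> 'a"
    and \<eta> :: "'a \<Rightarrow> real"
    and x :: 'a
  assumes P: "prob_space M"
    and X_meas: "X \<in> measurable M borel"
    and Xs_meas: "\<And>i. i \<ge> 1 \<Longrightarrow> Xs i \<in> measurable M borel"
    and indep: "prob_space.indep_vars M (\<lambda>_. borel) (\<lambda>i. if i = 0 then X else Xs i) UNIV"
    and ident: "\<And>i. i \<ge> 1 \<Longrightarrow> distr M borel (Xs i) = distr M borel X"
    and supp: "\<And>r. r > 0 \<Longrightarrow> measure (distr M borel X) (cball x r) > 0"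
    and \<eta>_meas: "\<eta> \<in> borel_measurable borel"
    and \<eta>_bdd: "bounded (range \<eta>)"
    and NN_meas: "\<And>m. m \<ge> 1 \<Longrightarrow> NN m \<in> measurable M borel"
    and NN_in: "\<And>m \<omega>. m \<ge> 1 \<Longrightarrow> \<omega> \<in> space M \<Longrightarrow> NN m \<omega> \<in> (\<lambda>i. Xs i \<omega>) ` {1..m}"
    and NN_min: "\<And>m \<omega> i. m \<ge> 1 \<Longrightarrow> \<omega> \<in> space M \<Longrightarrow> i \<in> {1..m} \<Longrightarrow>
                   dist x (NN m \<omega>) \<le> dist x (Xs i \<omega>)"
    and cond: "measure M {\<omega> \<in> space M. X \<omega> = x} > 0 \<or>
               (\<exists>r>0. (\<integral>\<omega>. indicator (cball x r) (X \<omega>) * \<bar>\<eta> (X \<omega>) - \<eta> x\<bar> \<partial>M) = 0)"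
  shows "(\<lambda>m. \<integral>\<omega>. \<bar>\<eta> (NN m \<omega>) - \<eta> x\<bar> \<partial>M) \<longlonglongrightarrow> 0"
proof -
  interpret prob_space M by (rule P)
  obtain K where K: "\<And>y. \<bar>\<eta> y\<bar> \<le> K"
    using \<eta>_bdd unfolding bounded_iff by auto
  have \<eta>m[measurable]: "\<eta> \<in> borel_measurable borel" by (rule \<eta>_meas)
  have Xm[measurable]: "X \<in> measurable M borel" by (rule X_meas)
  obtain r where r0: "r \<ge> 0"
    and good: "AE \<omega> in M. X \<omega> \<in> cball x r \<longrightarrow> \<eta> (X \<omega>) = \<eta> x"
    and qpos: "prob {\<omega> \<in> space M. X \<omega> \<in> cball x r} > 0"
  proof (cases "measure M {\<omega> \<in> space M. X \<omega> = x} > 0")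
    case True
    have "cball x 0 = {x}" by auto
    then show ?thesis using True
      by (intro that[of 0]) (auto intro!: AE_I2)
  next
    case False
    with cond obtain r where r: "r > 0"
      and int0: "(\<integral>\<omega>. indicator (cball x r) (X \<omega>) * \<bar>\<eta> (X \<omega>) - \<eta> x\<bar> \<partial>M) = 0" by auto
    have intg: "integrable M (\<lambda>\<omega>. indicator (cball x r) (X \<omega>) * \<bar>\<eta> (X \<omega>) - \<eta> x\<bar>)"
    proof (rule integrable_const_bound[where B="2*K"])
      show "AE \<omega> in M. norm (indicator (cball x r) (X \<omega>) * \<bar>\<eta> (X \<omega>) - \<eta> x\<bar>) \<le> 2*K"
      proof (intro AE_I2)
        fix \<omega>
        have a: "\<bar>\<eta> (X \<omega>) - \<eta> x\<bar> \<le> 2*K" using K[of "X \<omega>"] K[of x] by linarith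
        show "norm (indicator (cball x r) (X \<omega>) * \<bar>\<eta> (X \<omega>) - \<eta> x\<bar>) \<le> 2*K"
          using a K[of x] by (cases "X \<omega> \<in> cball x r") auto
      qed
      show "(\<lambda>\<omega>. indicator (cball x r) (X \<omega>) * \<bar>\<eta> (X \<omega>) - \<eta> x\<bar>) \<in> borel_measurable M"
        by (intro borel_measurable_times borel_measurable_abs borel_measurable_diff
            measurable_compose[OF Xm \<eta>m] measurable_compose[OF Xm borel_measurable_indicator]
            borel_measurable_const) auto
    qed
    have "AE \<omega> in M. indicator (cball x r) (X \<omega>) * \<bar>\<eta> (X \<omega>) - \<eta> x\<bar> = (0::real)"
      using integral_nonneg_eq_0_iff_AE[OF intg AE_I2] int0 by (simp add: indicator_def)
    then have g: "AE \<omega> in M. X \<omega> \<in> cball x r \<longrightarrow> \<eta> (X \<omega>) = \<eta> x"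
      by eventually_elim (auto simp: indicator_def)
    have "measure (distr M borel X) (cball x r) = prob (X -` cball x r \<inter> space M)"
      by (rule measure_distr) auto
    also have "X -` cball x r \<inter> space M = {\<omega> \<in> space M. X \<omega> \<in> cball x r}" by auto
    finally show ?thesis using supp[OF r] r g by (intro that[of r]) auto
  qed
  define C where "C = cball x r"
  have C_sets[measurable]: "C \<in> sets borel" unfolding C_def by auto
  define q where "q = prob {\<omega> \<in> space M. X \<omega> \<in> C}"
  have q0: "q > 0" using qpos by (simp add: q_def C_def)
  have q1: "q \<le> 1" unfolding q_def by simp
  have goodi: "AE \<omega> in M. Xs i \<omega> \<in> C \<longrightarrow> \<eta> (Xs i \<omega>) = \<eta> x" if i: "i \<ge> 1" for i
  proof -
    have Xsm[measurable]: "Xs i \<in> measurable M borel" using Xs_meas i .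
    have pr: "{y \<in> space borel. y \<in> C \<longrightarrow> \<eta> y = \<eta> x} \<in> sets borel" by measurable
    have "AE y in distr M borel X. y \<in> C \<longrightarrow> \<eta> y = \<eta> x"
      using good by (subst AE_distr_iff[OF Xm pr]) (simp add: C_def)
    then have "AE y in distr M borel (Xs i). y \<in> C \<longrightarrow> \<eta> y = \<eta> x"
      unfolding ident[OF i] .
    then show ?thesis by (subst (asm) AE_distr_iff[OF Xsm pr]) auto
  qed
  have probi: "prob (Xs i -` (- C) \<inter> space M) = 1 - q" if i: "i \<ge> 1" for i
  proof -
    have Xsm[measurable]: "Xs i \<in> measurable M borel" using Xs_meas i .
    have "prob (Xs i -` (- C) \<inter> space M) = measure (distr M borel (Xs i)) (- C)"
      by (rule measure_distr[symmetric]) auto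
    also have "\<dots> = measure (distr M borel X) (- C)" using ident[OF i] by simp
    also have "\<dots> = prob (X -` (- C) \<inter> space M)" by (rule measure_distr) auto
    also have "X -` (- C) \<inter> space M = space M - {\<omega> \<in> space M. X \<omega> \<in> C}" by auto
    also have "prob \<dots> = 1 - q" unfolding q_def by (rule prob_compl) auto
    finally show ?thesis .
  qed
  define E where "E m = {\<omega> \<in> space M. \<forall>i\<in>{1..m}. Xs i \<omega> \<notin> C}" for m
  have probE: "prob (E m) = (1 - q) ^ m" if m: "m \<ge> 1" for m
  proof -
    have "prob (\<Inter>i\<in>{1..m}. (\<lambda>i. if i = 0 then X else Xs i) i -` (- C) \<inter> space M)
      = (\<Prod>i\<in>{1..m}. prob ((\<lambda>i. if i = 0 then X else Xs i) i -` (- C) \<inter> space M))"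
      using m by (intro indep_varsD[OF indep]) auto
    also have "(\<Inter>i\<in>{1..m}. (\<lambda>i. if i = 0 then X else Xs i) i -` (- C) \<inter> space M) = E m"
      using m by (auto simp: E_def)
    also have "(\<Prod>i\<in>{1..m}. prob ((\<lambda>i. if i = 0 then X else Xs i) i -` (- C) \<inter> space M))
        = (\<Prod>i\<in>{1..m}. 1 - q)"
      by (intro prod.cong refl) (simp add: probi)
    finally show ?thesis by simp
  qed
  have bound: "(\<integral>\<omega>. \<bar>\<eta> (NN m \<omega>) - \<eta> x\<bar> \<partial>M) \<le> 2 * K * (1 - q) ^ m" if m: "m \<ge> 1" for m
  proof -
    have NNm[measurable]: "NN m \<in> measurable M borel" using NN_meas m .
    have Esets: "E m \<in> sets M"
      unfolding E_def using Xs_meas by (intro sets.sets_Collect_finite_All) auto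
    have intg: "integrable M (\<lambda>\<omega>. \<bar>\<eta> (NN m \<omega>) - \<eta> x\<bar>)"
    proof (rule integrable_const_bound[where B="2*K"])
      show "AE \<omega> in M. norm (\<bar>\<eta> (NN m \<omega>) - \<eta> x\<bar>) \<le> 2*K"
        using K by (intro AE_I2) (smt (verit) real_norm_def)
    qed measurable
    have "AE \<omega> in M. \<forall>i\<in>{1..m}. Xs i \<omega> \<in> C \<longrightarrow> \<eta> (Xs i \<omega>) = \<eta> x"
      by (intro AE_finite_allI) (auto intro: goodi)
    with AE_space have ae: "AE \<omega> in M. \<bar>\<eta> (NN m \<omega>) - \<eta> x\<bar> \<le> 2 * K * indicator (E m) \<omega>"
    proof eventually_elim
      case (elim \<omega>)
      then have sp: "\<omega> \<in> space M" by simp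
      show ?case
      proof (cases "\<omega> \<in> E m")
        case True
        then show ?thesis using K[of "NN m \<omega>"] K[of x] by (simp add: indicator_def)
      next
        case False
        with sp obtain i where i: "i \<in> {1..m}" "Xs i \<omega> \<in> C" by (auto simp: E_def)
        have "dist x (NN m \<omega>) \<le> r" using NN_min[OF m sp i(1)] i(2) by (auto simp: C_def)
        moreover obtain j where j: "j \<in> {1..m}" "NN m \<omega> = Xs j \<omega>" using NN_in[OF m sp] by auto
        ultimately have "Xs j \<omega> \<in> C" by (auto simp: C_def)
        then have "\<eta> (NN m \<omega>) = \<eta> x" using elim j by auto
        then show ?thesis using K[of x] by (simp add: indicator_def)
      qed
    qed
    have ii: "integrable M (indicator (E m) :: 'b \<Rightarrow> real)"
      using Esets by (intro integrable_real_indicator) (auto simp: emeasure_eq_measure)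
    have "(\<integral>\<omega>. \<bar>\<eta> (NN m \<omega>) - \<eta> x\<bar> \<partial>M) \<le> (\<integral>\<omega>. 2 * K * indicator (E m) \<omega> \<partial>M)"
      by (rule integral_mono_AE[OF intg _ ae]) (auto intro: ii)
    also have "\<dots> = 2 * K * prob (E m)" using Esets ii by simp
    finally show ?thesis using probE[OF m] by simp
  qed
  have "(\<lambda>m. 2 * K * (1 - q) ^ m) \<longlonglongrightarrow> 2 * K * 0"
    using q0 q1 by (intro tendsto_mult tendsto_const LIMSEQ_power_zero) auto
  then have lim: "(\<lambda>m. 2 * K * (1 - q) ^ m) \<longlonglongrightarrow> 0" by simp
  show ?thesis
  proof (rule tendsto_sandwich[OF _ _ tendsto_const lim])
    show "\<forall>\<^sub>F m in sequentially. 0 \<le> (\<integral>\<omega>. \<bar>\<eta> (NN m \<omega>) - \<eta> x\<bar> \<partial>M)"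
      by (intro always_eventually allI integral_nonneg_AE AE_I2) auto
    show "\<forall>\<^sub>F m in sequentially. (\<integral>\<omega>. \<bar>\<eta> (NN m \<omega>) - \<eta> x\<bar> \<partial>M) \<le> 2 * K * (1 - q) ^ m"
      using bound eventually_sequentially by blast
  qed
qed

end
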